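(* Let $d>0$, $r_C>0$, and let $\mathcal{C}=\{(x,y,r_C): |x|\le d,\ |y|\le d\}$ be the square of half-width $d$ centered at $(0,0,r_C)$ in the plane $z=r_C$, with unit normal $\mathbf{e}_z$. Let $l\ge1$ and $-l\le m\le l$ be integers. If $m$ is not a multiple of $4$ (i.e. $m$ is odd, or $m=2k$ with $k$ odd), then $$v_{lm}:=\int_{\mathcal{C}}\frac{\boldsymbol{\nu}_{lm}(\theta,\phi)}{R^{l+2}}\cdot\mathbf{e}_z\,dS=0.$$
   Context: $(R,\theta,\phi)$ are spherical coordinates of $(x,y,r_C)$: $R=\sqrt{x^2+y^2+r_C^2}$, $\theta=\arccos(r_C/R)$, $\phi$ the azimuthal angle of $(x,y)$; $\mathbf{e}_R,\mathbf{e}_\theta,\mathbf{e}_\phi$ the spherical orthonormal frame. $Y_{lm}(\theta,\phi)=\sqrt{\frac{2l+1}{4\pi}\frac{(l-m)!}{(l+m)!}}\,e^{im\phi}P_l^m(\cos\theta)$ with $P_l^m(x)=\frac{(-1)^m}{2^l l!}(1-x^2)^{m/2}\frac{d^{m+l}}{dx^{m+l}}(x^2-1)^l$, and $\boldsymbol{\nu}_{lm}=-(l+1)Y_{lm}\mathbf{e}_R+\frac{\partial Y_{lm}}{\partial\theta}\mathbf{e}_\theta+\frac{imY_{lm}}{\sin\theta}\mathbf{e}_\phi$. *)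

theory Defs
  imports "HOL-Analysis.Analysis"
begin

definition assoc_legendre :: "nat \<Rightarrow> int \<Rightarrow> real \<Rightarrow> real" where
  "assoc_legendre l m x =
     ((-1) powi m) / (2 ^ l * fact l) * (1 - x\<^sup>2) powr (real_of_int m / 2)
     * ((deriv ^^ nat (m + int l)) (\<lambda>t. (t\<^sup>2 - 1) ^ l)) x"

definition sph_Y :: "nat \<Rightarrow> int \<Rightarrow> real \<Rightarrow> real \<Rightarrow> complex" where
  "sph_Y l m \<theta> \<phi> =
     complex_of_real (sqrt ((2 * real l + 1) / (4 * pi)
        * (fact (nat (int l - m)) / fact (nat (int l + m)))))
     * cis (real_of_int m * \<phi>) * complex_of_real (assoc_legendre l m (cos \<theta>))"

definition e_R :: "real \<Rightarrow> real \<Rightarrow> real^3" where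
  "e_R \<theta> \<phi> = vector [sin \<theta> * cos \<phi>, sin \<theta> * sin \<phi>, cos \<theta>]"
definition e_theta :: "real \<Rightarrow> real \<Rightarrow> real^3" where
  "e_theta \<theta> \<phi> = vector [cos \<theta> * cos \<phi>, cos \<theta> * sin \<phi>, - sin \<theta>]"
definition e_phi :: "real \<Rightarrow> real \<Rightarrow> real^3" where
  "e_phi \<theta> \<phi> = vector [- sin \<phi>, cos \<phi>, 0]"
definition e_z :: "real^3" where
  "e_z = vector [0, 0, 1]"

definition cscale :: "complex \<Rightarrow> real^3 \<Rightarrow> complex^3" where
  "cscale c v = (\<chi> i. c * complex_of_real (v $ i))"
definition cdot :: "complex^3 \<Rightarrow> real^3 \<Rightarrow> complex" where
  "cdot v e = (\<Sum>i\<in>UNIV. v $ i * complex_of_real (e $ i))"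

definition nu :: "nat \<Rightarrow> int \<Rightarrow> real \<Rightarrow> real \<Rightarrow> complex^3" where
  "nu l m \<theta> \<phi> =
     cscale (- (of_nat l + 1) * sph_Y l m \<theta> \<phi>) (e_R \<theta> \<phi>)
   + cscale (vector_derivative (\<lambda>t. sph_Y l m t \<phi>) (at \<theta>)) (e_theta \<theta> \<phi>)
   + cscale (\<i> * of_int m * sph_Y l m \<theta> \<phi> / complex_of_real (sin \<theta>)) (e_phi \<theta> \<phi>)"

definition sphR :: "real \<Rightarrow> real \<Rightarrow> real \<Rightarrow> real" where
  "sphR rC x y = sqrt (x\<^sup>2 + y\<^sup>2 + rC\<^sup>2)"
definition sphTheta :: "real \<Rightarrow> real \<Rightarrow> real \<Rightarrow> real" where
  "sphTheta rC x y = arccos (rC / sphR rC x y)"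
definition sphPhi :: "real \<Rightarrow> real \<Rightarrow> real" where
  "sphPhi x y = Arg (Complex x y)"

text \<open>Integrand on the square C (surface element dS = dx dy, normal e_z).\<close>
definition v_integrand :: "nat \<Rightarrow> int \<Rightarrow> real \<Rightarrow> real \<times> real \<Rightarrow> complex" where
  "v_integrand l m rC p = (case p of (x, y) \<Rightarrow>
     cdot (nu l m (sphTheta rC x y) (sphPhi x y)) e_z
       / complex_of_real (sphR rC x y ^ (l + 2)))"

end

theory Submission
  imports Defs "HOL-Computational_Algebra.Polynomial"
begin

lemma deriv_funpow_poly: "(deriv ^^ k) (poly (p::real poly)) = poly ((pderiv ^^ k) p)"
proof (induction k)
  case 0 then show ?case by simp
next
  case (Suc k)
  have "deriv (poly q) = poly (pderiv q)" for q :: "real poly"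
    by (rule ext, rule DERIV_imp_deriv, rule poly_DERIV)
  then show ?case using Suc by simp
qed

lemma legendre_poly: "(\<lambda>t::real. (t\<^sup>2 - 1) ^ l) = poly ([:-1,0,1:] ^ l)"
  by (rule ext) (simp add: poly_power power2_eq_square algebra_simps)

lemma dvd_pderiv_step:
  fixes p :: "real poly"
  assumes "[:-1,1:] ^ Suc j dvd p"
  shows "[:-1,1:] ^ j dvd pderiv p"
proof -
  from assms obtain r where r: "p = [:-1,1:] ^ Suc j * r" by (auto elim: dvdE)
  have "pderiv p = [:-1,1:] ^ j * (smult (of_nat (Suc j)) r * pderiv [:-1,1:] + [:-1,1:] * pderiv r)"
    unfolding r pderiv_mult pderiv_power_Suc by (simp add: algebra_simps)
  then show ?thesis by simp
qed

lemma dvd_pderiv_funpow: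
  fixes p :: "real poly"
  assumes "[:-1,1:] ^ (j + i) dvd p"
  shows "[:-1,1:] ^ j dvd (pderiv ^^ i) p"
  using assms
proof (induction i arbitrary: j)
  case 0 then show ?case by simp
next
  case (Suc i)
  have "[:-1,1:] ^ Suc j dvd (pderiv ^^ i) p"
    using Suc.IH[of "Suc j"] Suc.prems by simp
  then show ?case by (simp add: dvd_pderiv_step)
qed


lemma A_deriv:
  fixes Q :: "real poly" and c e x :: real
  assumes "1 - x^2 > 0"
  shows "((\<lambda>x. c * (1 - x^2) powr e * poly Q x) has_real_derivative
     c * (e * (1-x^2) powr (e-1) * (-2*x) * poly Q x + (1-x^2) powr e * poly (pderiv Q) x)) (at x)"
  using assms by (auto intro!: derivative_eq_intros simp: algebra_simps)

lemma cdot_ez: "cdot v e_z = v $ 3"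
  by (simp add: cdot_def e_z_def sum_3)

lemma nu_z_general:
  fixes C c e :: real and Q :: "real poly" and L :: nat and m :: int
  assumes Y: "\<And>t. sph_Y L m t \<phi> = complex_of_real C * cis (real_of_int m * \<phi>)
        * complex_of_real (c * (1 - (cos t)^2) powr e * poly Q (cos t))"
    and s: "sin \<theta> \<noteq> 0"
  shows "cdot (nu L m \<theta> \<phi>) e_z = complex_of_real C * cis (real_of_int m * \<phi>)
     * complex_of_real (c * (1 - (cos \<theta>)^2) powr e * (- (real L + 1 + 2 * e) * cos \<theta> * poly Q (cos \<theta>)
          + (1 - (cos \<theta>)^2) * poly (pderiv Q) (cos \<theta>)))"
proof -
  define u where "u = cos \<theta>"
  have pos: "1 - u^2 > 0" using s unfolding u_def
    by (metis diff_gt_0_iff_gt sin_cos_squared_add3 power2_less_eq_zero_iff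
         add_diff_cancel_right' less_eq_real_def not_less sin_squared_eq)
  define A' where "A' = c * (e * (1-u^2) powr (e-1) * (-2*u) * poly Q u + (1-u^2) powr e * poly (pderiv Q) u)"
  have d1: "((\<lambda>t. c * (1 - (cos t)^2) powr e * poly Q (cos t)) has_real_derivative A' * (- sin \<theta>)) (at \<theta>)"
  proof -
    have "((\<lambda>x. c * (1 - x^2) powr e * poly Q x) has_real_derivative A') (at (cos \<theta>))"
      using A_deriv[OF pos, of c e Q] unfolding A'_def u_def .
    from DERIV_chain2[OF this DERIV_cos[of \<theta>]] show ?thesis by simp
  qed
  have d2: "((\<lambda>t. sph_Y L m t \<phi>) has_vector_derivative
     complex_of_real C * cis (real_of_int m * \<phi>) * complex_of_real (A' * (- sin \<theta>))) (at \<theta>)"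
    unfolding Y
    by (rule has_vector_derivative_mult_right[OF has_vector_derivative_of_real[OF d1]])
  have vd: "vector_derivative (\<lambda>t. sph_Y L m t \<phi>) (at \<theta>) =
     complex_of_real C * cis (real_of_int m * \<phi>) * complex_of_real (A' * (- sin \<theta>))"
    using d2 by (rule vector_derivative_at)
  have sin2: "(sin \<theta>)^2 = 1 - u^2" unfolding u_def by (simp add: sin_squared_eq)
  have pw: "(1-u^2) * (1-u^2) powr (e-1) = (1-u^2) powr e"
    using pos by (simp add: powr_diff)
  have "(- (real L + 1) * (c * (1 - u^2) powr e * poly Q u)) * u + A' * (- sin \<theta>) * (- sin \<theta>)
     = c * (1 - u^2) powr e * (- (real L + 1 + 2 * e) * u * poly Q u + (1 - u^2) * poly (pderiv Q) u)"
  proof -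
    have "A' * (- sin \<theta>) * (- sin \<theta>) = A' * (1 - u^2)"
      using sin2 by (simp add: power2_eq_square)
    also have "\<dots> = c * (e * ((1-u^2) * (1-u^2) powr (e-1)) * (-2*u) * poly Q u + (1-u^2) powr e * (1-u^2) * poly (pderiv Q) u)"
      unfolding A'_def by (simp add: algebra_simps)
    finally show ?thesis unfolding pw by (simp add: algebra_simps)
  qed
  then have key: "complex_of_real (- (real L + 1) * (c * (1 - u^2) powr e * poly Q u)) * complex_of_real u
      + complex_of_real (A' * (- sin \<theta>)) * complex_of_real (- sin \<theta>)
     = complex_of_real (c * (1 - u^2) powr e * (- (real L + 1 + 2 * e) * u * poly Q u + (1 - u^2) * poly (pderiv Q) u))"
    by (metis of_real_add of_real_mult)
  have "cdot (nu L m \<theta> \<phi>) e_z = (- (of_nat L + 1) * sph_Y L m \<theta> \<phi>) * complex_of_real (cos \<theta>)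
     + vector_derivative (\<lambda>t. sph_Y L m t \<phi>) (at \<theta>) * complex_of_real (- sin \<theta>)"
    unfolding cdot_ez nu_def by (simp add: cscale_def e_R_def e_theta_def e_phi_def)
  also have "\<dots> = complex_of_real C * cis (real_of_int m * \<phi>) *
     (complex_of_real (- (real L + 1) * (c * (1 - u^2) powr e * poly Q u)) * complex_of_real u
      + complex_of_real (A' * (- sin \<theta>)) * complex_of_real (- sin \<theta>))"
    unfolding vd by (simp add: Y[of \<theta>] u_def algebra_simps)
  also have "\<dots> = complex_of_real C * cis (real_of_int m * \<phi>) * complex_of_real (c * (1 - u^2) powr e * (- (real L + 1 + 2 * e) * u * poly Q u + (1 - u^2) * poly (pderiv Q) u))"
    unfolding key ..
  finally show ?thesis unfolding u_def .
qed


lemma poly_bounded01: "\<exists>B. \<forall>u\<in>{0..1}. \<bar>poly (p::real poly) u\<bar> \<le> B"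
proof -
  have "compact (poly p ` {0..1})"
    by (intro compact_continuous_image continuous_intros) auto
  then have "bounded (poly p ` {0..1})" by (rule compact_imp_bounded)
  then show ?thesis unfolding bounded_real by auto
qed

lemma powr_half_int:
  assumes "(x::real) > 0"
  shows "x powr (real_of_int m / 2) = sqrt x powi m"
proof -
  have "x powr (real_of_int m / 2) = (x powr (1/2)) powr (real_of_int m)"
    by (simp add: powr_powr)
  also have "\<dots> = sqrt x powr (real_of_int m)" using assms by (simp add: powr_half_sqrt)
  also have "\<dots> = sqrt x powi m" using assms
    by (simp add: powr_real_of_int power_int_def power_inverse)
  finally show ?thesis .
qed

lemma abs_mult_le1:
  fixes a b B :: real
  assumes "\<bar>a\<bar> \<le> 1" "\<bar>b\<bar> \<le> B"
  shows "\<bar>a * b\<bar> \<le> B"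
proof -
  have "\<bar>a * b\<bar> = \<bar>a\<bar> * \<bar>b\<bar>" by (rule abs_mult)
  also have "\<dots> \<le> 1 * \<bar>b\<bar>" using assms(1) by (intro mult_right_mono) auto
  finally show ?thesis using assms(2) by simp
qed

lemma W_bound:
  fixes Wp :: "real poly" and m :: int
  assumes "m > 0 \<or> (m < 0 \<and> [:-1,1:] ^ nat (-m) dvd Wp)"
  shows "\<exists>B. \<forall>u\<in>{0..<1}. \<bar>(1 - u^2) powr (real_of_int m / 2) * poly Wp u\<bar> \<le> B"
  using assms
proof
  assume mp: "m > 0"
  obtain B where B: "\<forall>u\<in>{0..1}. \<bar>poly Wp u\<bar> \<le> B" using poly_bounded01 by blast
  show ?thesis
  proof (intro exI ballI)
    fix u :: real assume u: "u \<in> {0..<1}"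
    then have pos: "1 - u^2 > 0" by (simp add: power_less_one_iff abs_square_less_1)
    have s1: "sqrt (1 - u^2) \<le> 1" "sqrt (1 - u^2) \<ge> 0" using u pos by (auto simp: power_le_one)
    have "\<bar>(1 - u^2) powr (real_of_int m / 2)\<bar> = sqrt (1 - u^2) ^ nat m"
      using pos mp by (simp add: powr_half_int power_int_def)
    also have "\<dots> \<le> 1" using s1 by (simp add: power_le_one)
    finally have "\<bar>(1 - u^2) powr (real_of_int m / 2)\<bar> \<le> 1" .
    moreover have "\<bar>poly Wp u\<bar> \<le> B" using B u by auto
    ultimately show "\<bar>(1 - u^2) powr (real_of_int m / 2) * poly Wp u\<bar> \<le> B"
      by (rule abs_mult_le1)
  qed
next
  assume mn: "m < 0 \<and> [:-1,1:] ^ nat (-m) dvd Wp"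
  define n where "n = nat (-m)"
  obtain r where r: "Wp = [:-1,1:] ^ n * r" using mn unfolding n_def by (auto elim: dvdE)
  obtain B where B: "\<forall>u\<in>{0..1}. \<bar>poly r u\<bar> \<le> B" using poly_bounded01 by blast
  show ?thesis
  proof (intro exI ballI)
    fix u :: real assume u: "u \<in> {0..<1}"
    then have pos: "1 - u^2 > 0" by (simp add: power_less_one_iff abs_square_less_1)
    define s where "s = sqrt (1 - u^2)"
    have spos: "s > 0" using pos unfolding s_def by simp
    have le: "1 - u \<le> s"
    proof -
      have "(1 - u)^2 \<le> 1 - u^2" using u by (simp add: power2_eq_square algebra_simps mult_left_le_one_le)
      then show ?thesis unfolding s_def using u by (simp add: real_le_rsqrt)
    qed
    have eq: "(1 - u^2) powr (real_of_int m / 2) * poly Wp u = ((u - 1) / s) ^ n * poly r u"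
      using pos spos mn unfolding r s_def n_def
      by (simp add: powr_half_int power_int_def poly_power power_divide field_simps)
    have "\<bar>(u - 1) / s\<bar> \<le> 1" using le spos u by (simp add: abs_if divide_le_eq_1 field_simps)
    then have "\<bar>((u - 1) / s) ^ n\<bar> \<le> 1" by (simp add: power_abs power_le_one)
    moreover have "\<bar>poly r u\<bar> \<le> B" using B u by auto
    ultimately show "\<bar>(1 - u^2) powr (real_of_int m / 2) * poly Wp u\<bar> \<le> B"
      unfolding eq by (rule abs_mult_le1)
  qed
qed


lemma sphR_gt:
  assumes "rC > 0" "(x, y) \<noteq> (0::real, 0::real)"
  shows "sphR rC x y > rC"
proof -
  have "x^2 + y^2 > 0" using assms(2) by (auto simp: sum_power2_gt_zero_iff)
  then have "rC^2 < x^2 + y^2 + rC^2" by simp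
  then have "sqrt (rC^2) < sqrt (x^2 + y^2 + rC^2)" by (rule real_sqrt_less_mono)
  then show ?thesis using assms(1) by (simp add: sphR_def)
qed

lemma rot_image:
  "(\<lambda>p::real\<times>real. (- snd p, fst p)) ` cbox (a1, a2) (b1, b2) = cbox (- b2, a1) (- a2, b1)"
proof (rule set_eqI)
  fix q :: "real \<times> real"
  obtain x y where q: "q = (x, y)" by (cases q)
  have "q \<in> (\<lambda>p::real\<times>real. (- snd p, fst p)) ` cbox (a1, a2) (b1, b2) \<longleftrightarrow> (y, - x) \<in> cbox (a1, a2) (b1, b2)"
    unfolding q by (force intro: image_eqI[where x="(y, - x)"])
  then show "q \<in> (\<lambda>p::real\<times>real. (- snd p, fst p)) ` cbox (a1, a2) (b1, b2) \<longleftrightarrow> q \<in> cbox (- b2, a1) (- a2, b1)"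
    unfolding q cbox_Pair_eq by auto
qed

lemma rotinv_image:
  "(\<lambda>p::real\<times>real. (snd p, - fst p)) ` cbox (a1, a2) (b1, b2) = cbox (a2, - b1) (b2, - a1)"
proof (rule set_eqI)
  fix q :: "real \<times> real"
  obtain x y where q: "q = (x, y)" by (cases q)
  have "q \<in> (\<lambda>p::real\<times>real. (snd p, - fst p)) ` cbox (a1, a2) (b1, b2) \<longleftrightarrow> (- y, x) \<in> cbox (a1, a2) (b1, b2)"
    unfolding q by (force intro: image_eqI[where x="(- y, x)"])
  then show "q \<in> (\<lambda>p::real\<times>real. (snd p, - fst p)) ` cbox (a1, a2) (b1, b2) \<longleftrightarrow> q \<in> cbox (a2, - b1) (b2, - a1)"
    unfolding q cbox_Pair_eq by auto
qed

lemma ipow_ne1: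
  assumes "\<not> (4 dvd (m::int))"
  shows "\<i> powi m \<noteq> 1"
proof -
  define q r where "q = m div 4" and "r = m mod 4"
  have m: "m = 4 * q + r" unfolding q_def r_def by simp
  have r: "r = 1 \<or> r = 2 \<or> r = 3" using assms unfolding r_def by (auto simp: dvd_eq_mod_eq_0)
  have "\<i> powi m = \<i> powi (4 * q) * \<i> powi r" unfolding m by (simp add: power_int_add)
  also have "\<i> powi (4 * q) = (\<i> powi 4) powi q" by (simp add: power_int_mult)
  also have "\<i> powi 4 = (1::complex)" by (simp add: power_int_def)
  finally have "\<i> powi m = \<i> powi r" by simp
  then show ?thesis using r by (auto simp: power_int_def eval_nat_numeral complex_eq_iff)
qed

theorem mainTheorem5:
  fixes d rC :: real and l :: nat and m :: int
  assumes "d > 0" and "rC > 0" and "l \<ge> 1"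
    and "- int l \<le> m" and "m \<le> int l"
    and "\<not> (4 dvd m)"
  shows "(v_integrand l m rC has_integral 0) (cbox (- d, - d) (d, d))"
proof -
  define k where "k = nat (m + int l)"
  define Q where "Q = (pderiv ^^ k) ([:-1,0,1:] ^ l :: real poly)"
  define C where "C = sqrt ((2 * real l + 1) / (4 * pi) * (fact (nat (int l - m)) / fact (nat (int l + m))))"
  define c :: real where "c = ((-1) powi m) / (2 ^ l * fact l)"
  define Wp where "Wp = smult (- (real l + 1 + real_of_int m)) (pCons 0 Q) + [:1,0,-1:] * pderiv Q"
  define W where "W = (\<lambda>u::real. (1 - u^2) powr (real_of_int m / 2) * poly Wp u)"
  define G where "G = (\<lambda>x y. W (rC / sphR rC x y) / sphR rC x y ^ (l + 2))"
  define g where "g = (\<lambda>p::real\<times>real. complex_of_real C * sgn (Complex (fst p) (snd p)) powi m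
       * complex_of_real (c * G (fst p) (snd p)))"
  have m0: "m \<noteq> 0" using assms(6) by auto
  have Y: "sph_Y l m t \<phi> = complex_of_real C * cis (real_of_int m * \<phi>)
        * complex_of_real (c * (1 - (cos t)^2) powr (real_of_int m / 2) * poly Q (cos t))" for t \<phi>
    unfolding sph_Y_def assoc_legendre_def legendre_poly deriv_funpow_poly C_def c_def Q_def k_def
    by (simp add: algebra_simps)
  have eq: "v_integrand l m rC p = g p" if p0: "p \<noteq> 0" for p
  proof -
    obtain x y where p: "p = (x, y)" by (cases p)
    define R where "R = sphR rC x y"
    define u where "u = rC / R"
    have R: "R > rC" using sphR_gt[OF assms(2)] p0 p unfolding R_def by (auto simp: zero_prod_def)
    have u: "0 < u" "u < 1" using R assms(2) unfolding u_def by (auto simp: field_simps)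
    define \<theta> where "\<theta> = arccos u"
    have cth: "cos \<theta> = u" using u unfolding \<theta>_def by simp
    have sth: "sin \<theta> = sqrt (1 - u^2)" using u unfolding \<theta>_def by (simp add: sin_arccos)
    have "u^2 < 1" using u by (simp add: power_less_one_iff abs_square_less_1)
    then have sth0: "sin \<theta> \<noteq> 0" unfolding sth by simp
    have z0: "Complex x y \<noteq> 0" using p0 p by (simp add: complex_eq_iff zero_prod_def)
    have cisA: "cis (real_of_int m * Arg (Complex x y)) = sgn (Complex x y) powi m"
      using z0 by (simp add: cis_power_int[symmetric] cis_Arg)
    have nz: "cdot (nu l m \<theta> (Arg (Complex x y))) e_z = complex_of_real C * sgn (Complex x y) powi m
       * complex_of_real (c * W u)"
      unfolding nu_z_general[OF Y sth0] cisA cth W_def Wp_def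
      by (simp add: algebra_simps power2_eq_square)
    show ?thesis
      unfolding p v_integrand_def g_def G_def
      by (simp add: nz sphTheta_def sphPhi_def flip: R_def u_def \<theta>_def)
  qed

  have g0: "g 0 = 0" using m0 by (simp add: g_def zero_prod_def Complex_eq)
  have grot: "g (- snd p, fst p) = \<i> powi m * g p" for p
  proof -
    obtain x y where p: "p = (x, y)" by (cases p)
    have "sphR rC (- y) x = sphR rC x y" by (simp add: sphR_def add.commute)
    moreover have "Complex (- y) x = \<i> * Complex x y" by (simp add: complex_eq_iff)
    moreover have "sgn \<i> = \<i>" by (simp add: sgn_div_norm)
    ultimately show ?thesis unfolding g_def G_def p
      by (simp add: sgn_mult power_int_mult_distrib)
  qed
  have Wb: "\<exists>B. \<forall>u\<in>{0..<1}. \<bar>W u\<bar> \<le> B"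
    unfolding W_def
  proof (rule W_bound)
    show "0 < m \<or> m < 0 \<and> [:-1,1:] ^ nat (- m) dvd Wp"
    proof (cases "m > 0")
      case False
      then have mneg: "m < 0" using m0 by simp
      define n where "n = nat (- m)"
      have n1: "n \<ge> 1" using mneg unfolding n_def by simp
      have lnk: "l = n + k" using mneg assms(4) unfolding n_def k_def by simp
      have P: "([:-1,0,1:] :: real poly) ^ l = [:-1,1:] ^ l * [:1,1:] ^ l"
        by (simp add: power_mult_distrib[symmetric])
      have "[:-1,1:] ^ (n + k) dvd ([:-1,0,1:] ^ l :: real poly)" unfolding P lnk[symmetric] by simp
      then have dQ: "[:-1,1:] ^ n dvd Q" unfolding Q_def by (rule dvd_pderiv_funpow)
      have "[:-1,1:] ^ Suc (n - 1) dvd Q" using dQ n1 by simp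
      then have dQ': "[:-1,1:] ^ (n - 1) dvd pderiv Q" by (rule dvd_pderiv_step)
      obtain s where s: "pderiv Q = [:-1,1:] ^ (n - 1) * s" using dQ' by (auto elim: dvdE)
      have e3: "[:1,0,-1:] = [:-1,1:] * [:-1,-1::real:]" by simp
      have "[:1,0,-1:] * pderiv Q = ([:-1,1:] ^ (n - 1) * [:-1,1:]) * ([:-1,-1:] * s)"
        unfolding s e3 by (simp add: algebra_simps)
      then have "[:-1,1:] ^ (n - 1) * [:-1,1:] dvd [:1,0,-1:] * pderiv Q"
        by (metis dvd_triv_left)
      moreover have "[:-1,1:] ^ (n - 1) * [:-1,1:] = ([:-1,1:] ^ n :: real poly)"
        using n1 by (metis Suc_diff_1 less_le_trans zero_less_one power_Suc2)
      ultimately have d2: "[:-1,1:] ^ n dvd [:1,0,-1:] * pderiv Q" by simp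
      have "smult (- (real l + 1 + real_of_int m)) (pCons 0 Q) = [:0, - (real l + 1 + real_of_int m):] * Q" by simp
      then have d1: "[:-1,1:] ^ n dvd smult (- (real l + 1 + real_of_int m)) (pCons 0 Q)"
        using dQ by (metis dvd_mult)
      show ?thesis using d1 d2 mneg unfolding Wp_def n_def by (simp add: dvd_add)
    qed simp
  qed
  then obtain B where B: "\<And>u. 0 \<le> u \<Longrightarrow> u < 1 \<Longrightarrow> \<bar>W u\<bar> \<le> B"
    by (metis atLeastLessThan_iff)
  have B0: "B \<ge> 0" using B[of 0] by simp
  define K where "K = \<bar>C\<bar> * \<bar>c\<bar> * (B / rC ^ (l + 2))"
  have gbound: "norm (g p) \<le> K" for p
  proof (cases "p = 0")
    case True then show ?thesis using g0 B0 assms(2) by (simp add: K_def)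
  next
    case False
    obtain x y where p: "p = (x, y)" by (cases p)
    define R where "R = sphR rC x y"
    have R: "R > rC" using sphR_gt[OF assms(2)] False p unfolding R_def by (auto simp: zero_prod_def)
    have u: "0 \<le> rC / R" "rC / R < 1" using R assms(2) by (auto simp: field_simps)
    have z0: "Complex x y \<noteq> 0" using False p by (simp add: complex_eq_iff zero_prod_def)
    have "\<bar>G x y\<bar> = \<bar>W (rC / R)\<bar> / R ^ (l + 2)" unfolding G_def R_def[symmetric] using R assms(2)
      by (simp add: abs_divide)
    also have "\<dots> \<le> B / R ^ (l + 2)" using B[OF u] R assms(2) by (simp add: divide_right_mono)
    also have "\<dots> \<le> B / rC ^ (l + 2)" using R assms(2) B0
      by (intro divide_left_mono power_mono mult_pos_pos) auto
    finally have "\<bar>G x y\<bar> \<le> B / rC ^ (l + 2)" .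
    moreover have "norm (g p) = \<bar>C\<bar> * \<bar>c\<bar> * \<bar>G x y\<bar>" unfolding g_def p using z0
      by (simp add: norm_mult norm_power_int abs_mult norm_sgn)
    ultimately show ?thesis unfolding K_def by (metis abs_ge_zero mult_left_mono zero_le_mult_iff)
  qed
  have gcont: "continuous_on (- {0}) g"
  proof -
    have "isCont g p" if p0: "p \<noteq> 0" for p
    proof -
      obtain x y where p: "p = (x, y)" by (cases p)
      have R: "sphR rC x y > rC" using sphR_gt[OF assms(2)] p0 p by (auto simp: zero_prod_def)
      have u: "0 < 1 - (rC / sphR rC x y)^2" using R assms(2)
        by (simp add: power_less_one_iff abs_square_less_1 field_simps power_strict_mono)
      have z0: "Complex x y \<noteq> 0" using p0 p by (simp add: complex_eq_iff zero_prod_def)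
      have Rpos: "sqrt (x^2 + y^2 + rC^2) \<noteq> 0" using R assms(2) unfolding sphR_def by auto
      have Wc: "isCont W (rC / sphR rC x y)" unfolding W_def using u
        by (intro continuous_intros) auto
      have Rc: "isCont (\<lambda>p::real\<times>real. sphR rC (fst p) (snd p)) (x, y)"
        unfolding sphR_def by (intro continuous_intros)
      have Rne: "sphR rC x y \<noteq> 0" using R assms(2) by auto
      have uc: "isCont (\<lambda>p::real\<times>real. rC / sphR rC (fst p) (snd p)) (x, y)"
        using Rc Rne by (intro continuous_intros) auto
      have Wuc: "isCont (\<lambda>p::real\<times>real. W (rC / sphR rC (fst p) (snd p))) (x, y)"
        using isCont_o2[OF uc] Wc by simp
      have Gc: "isCont (\<lambda>p::real\<times>real. G (fst p) (snd p)) (x, y)"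
        unfolding G_def using Wuc Rc Rne by (intro continuous_intros) auto
      have Zc: "isCont (\<lambda>p::real\<times>real. Complex (fst p) (snd p)) (x, y)"
        unfolding Complex_eq by (intro continuous_intros)
      have Sc: "isCont (\<lambda>p::real\<times>real. sgn (Complex (fst p) (snd p)) powi m) (x, y)"
        using Zc z0 by (intro continuous_intros) (auto simp: sgn_eq_0_iff)
      show ?thesis unfolding g_def p
        using Sc Gc Zc z0 by (intro continuous_intros) (auto simp: sgn_eq_0_iff)
    qed
    then show ?thesis by (subst continuous_on_eq_continuous_at) auto
  qed
  define S where "S = cbox (- d, - d) (d, d) - {0::real\<times>real}"
  have Sleb: "S \<in> sets lebesgue" unfolding S_def by (intro sets.Diff) auto
  have Slm: "S \<in> lmeasurable" unfolding S_def by (intro fmeasurable_Diff) auto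
  have gS: "g integrable_on S"
  proof (rule measurable_bounded_by_integrable_imp_integrable)
    show "g \<in> borel_measurable (lebesgue_on S)"
      by (rule continuous_imp_measurable_on_sets_lebesgue[OF continuous_on_subset[OF gcont] Sleb])
        (auto simp: S_def)
    show "(\<lambda>_. K) integrable_on S" using Slm by (rule integrable_on_const)
  qed (use gbound Sleb in auto)
  have gint: "g integrable_on cbox (- d, - d) (d, d)"
    by (rule integrable_spike_set[OF gS]) (auto simp: S_def intro: negligible_subset[OF negligible_sing])
  define I where "I = integral (cbox (- d, - d) (d, d)) g"
  have hI: "(g has_integral I) (cbox (- d, - d) (d, d))" using gint unfolding I_def by auto
  have tw: "((\<lambda>x. g (- snd x, fst x)) has_integral (1 / 1) *\<^sub>R I)
      ((\<lambda>p. (snd p, - fst p)) ` cbox (- d, - d) (d, d))"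
  proof (rule has_integral_twiddle[OF _ _ _ _ _ _ _ hI])
    show "\<exists>w z. (\<lambda>p::real\<times>real. (- snd p, fst p)) ` cbox u v = cbox w z" for u v
      by (cases u; cases v) (auto simp: rot_image)
    show "\<exists>w z. (\<lambda>p::real\<times>real. (snd p, - fst p)) ` cbox u v = cbox w z" for u v
      by (cases u; cases v) (auto simp: rotinv_image)
    show "Henstock_Kurzweil_Integration.content ((\<lambda>p::real\<times>real. (- snd p, fst p)) ` cbox u v) = 1 * Henstock_Kurzweil_Integration.content (cbox u v)" for u v
      by (cases u; cases v) (simp add: rot_image content_Pair)
    show "continuous (at x) (\<lambda>p::real\<times>real. (- snd p, fst p))" for x
      by (intro continuous_intros)
  qed auto
  have "(\<lambda>p::real\<times>real. (snd p, - fst p)) ` cbox (- d, - d) (d, d) = cbox (- d, - d) (d, d)"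
    by (simp add: rotinv_image)
  with tw have "((\<lambda>x. \<i> powi m * g x) has_integral I) (cbox (- d, - d) (d, d))"
    by (simp add: grot)
  moreover have "((\<lambda>x. \<i> powi m * g x) has_integral \<i> powi m * I) (cbox (- d, - d) (d, d))"
    using hI by (rule has_integral_mult_right)
  ultimately have "\<i> powi m * I = I" using has_integral_unique by blast
  then have "(\<i> powi m - 1) * I = 0" by (simp add: algebra_simps)
  then have I0: "I = 0" using ipow_ne1[OF assms(6)] by simp
  show ?thesis
  proof (rule has_integral_spike[OF negligible_sing[of 0] _ hI[unfolded I0]])
    show "x \<in> cbox (- d, - d) (d, d) - {0} \<Longrightarrow> v_integrand l m rC x = g x" for x
      using eq by auto
  qed
qed

end
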